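(* Let $X$ be a finite set and let $(p_B)_{B\subseteq X}$ be nonnegative reals with $\sum_{B\subseteq X}p_B=1$. For $A\subseteq X$ let $\mathcal{S}_A=\{B\subseteq X : A\cap B\neq\emptyset \text{ and } A\cap (X\setminus B)\neq\emptyset\}$ and $s_A=\sum_{B\in\mathcal{S}_A}p_B$ (so $s_A=0$ whenever $|A|\le 1$). Then: \begin{enumerate} \item For all $A\subseteq X$, $\displaystyle s_A=\sum_{B\subseteq A}(-1)^{|B|}s_B$ (the sum including $B=\emptyset$ and $B=A$). \item If $A\subseteq X$ has odd cardinality, then $\displaystyle s_A=\sum_{\substack{B\subset A\\ |B|\text{ even}}}\frac{\mathbb{T}_{|A|-|B|}}{2^{|A|-|B|}}\,s_B$. \end{enumerate}
   Context: $p_B$ is interpreted as the probability that, at a given bi-allelic site, exactly the taxa in $B$ have state $1$ (and those in $X\setminus B$ have state $0$); $s_A$ is then the probability that the site is segregating (non-constant) over $A$. The tangent numbers $\mathbb{T}_k$ are defined by the power series $\tanh(x)=\sum_{k=0}^\infty \mathbb{T}_k\,\frac{x^k}{k!}$. *)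

theory Defs
  imports "HOL-Analysis.Analysis"
begin

text \<open>Tangent numbers: tanh x = sum_k T_k x^k / k!, i.e. T_k is the k-th derivative of tanh at 0.\<close>
definition tangent_number :: "nat \<Rightarrow> real" where
  "tangent_number k = (deriv ^^ k) (tanh :: real \<Rightarrow> real) 0"

definition seg_splits :: "'a set \<Rightarrow> 'a set \<Rightarrow> 'a set set" where
  "seg_splits X A = {B. B \<subseteq> X \<and> A \<inter> B \<noteq> {} \<and> A \<inter> (X - B) \<noteq> {}}"

definition seg_prob :: "'a set \<Rightarrow> ('a set \<Rightarrow> real) \<Rightarrow> 'a set \<Rightarrow> real" where
  "seg_prob X p A = (\<Sum>B\<in>seg_splits X A. p B)"

end

theory Submission
  imports Defs "HOL-Computational_Algebra.Polynomial"
begin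


lemma alt_pow:
  assumes "finite A"
  shows "(\<Sum>C\<in>Pow A. (-1::real) ^ card C) = (if A = {} then 1 else 0)"
proof (cases "A = {}")
  case True then show ?thesis by simp
next
  case False
  have "card {T. T \<subseteq> A \<and> {} \<subseteq> T \<and> even (card T)} = card {T. T \<subseteq> A \<and> {} \<subseteq> T \<and> odd (card T)}"
    using card_subsupersets_even_odd[of A "{}"] assms False by blast
  then have "card {x. x \<in> Pow A \<and> even (card x)} = card {x. x \<in> Pow A \<and> odd (card x)}" by simp
  from sum_alternating_cancels[OF _ this] assms False show ?thesis by simp
qed

lemma alt_sub:
  assumes "finite A"
  shows "(\<Sum>C\<in>Pow A. (-1::real) ^ card C * (if C \<subseteq> D then 1 else 0)) = (if A \<inter> D = {} then 1 else 0)"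
proof -
  have "(\<Sum>C\<in>Pow A. (-1::real) ^ card C * (if C \<subseteq> D then 1 else 0)) = (\<Sum>C\<in>Pow A \<inter> {C. C \<subseteq> D}. (-1::real) ^ card C)"
    by (simp add: sum.inter_restrict assms if_distrib cong: if_cong)
  also have "Pow A \<inter> {C. C \<subseteq> D} = Pow (A \<inter> D)" by auto
  finally show ?thesis using alt_pow[of "A \<inter> D"] assms by simp
qed

lemma seg_prob_alt:
  assumes "finite X"
  shows "seg_prob X p C = (\<Sum>B\<in>Pow X. p B * (if C \<inter> B \<noteq> {} \<and> C \<inter> (X - B) \<noteq> {} then 1 else 0))"
proof -
  have "seg_splits X C = Pow X \<inter> {B. C \<inter> B \<noteq> {} \<and> C \<inter> (X - B) \<noteq> {}}"
    unfolding seg_splits_def by auto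
  then show ?thesis unfolding seg_prob_def
    by (auto simp add: sum.inter_restrict assms intro!: sum.cong)
qed

lemma ind_decomp:
  assumes "C \<subseteq> X"
  shows "(if C \<inter> B \<noteq> {} \<and> C \<inter> (X - B) \<noteq> {} then 1 else 0 :: real)
     = 1 - (if C \<subseteq> X - B then 1 else 0) - (if C \<subseteq> B then 1 else 0) + (if C \<subseteq> {} then 1 else 0)"
  using assms by auto

lemma part1:
  assumes "finite X" "A \<subseteq> X"
  shows "seg_prob X p A = (\<Sum>C\<in>Pow A. (-1) ^ card C * seg_prob X p C)"
proof -
  have fA: "finite A" using assms finite_subset by blast
  define ind where "ind C B = (if C \<inter> B \<noteq> {} \<and> C \<inter> (X - B) \<noteq> {} then 1 else 0 :: real)" for C B
  have "(\<Sum>C\<in>Pow A. (-1) ^ card C * seg_prob X p C)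
      = (\<Sum>C\<in>Pow A. \<Sum>B\<in>Pow X. p B * ((-1) ^ card C * ind C B))"
    by (simp add: seg_prob_alt[OF assms(1)] ind_def sum_distrib_left mult_ac)
  also have "\<dots> = (\<Sum>B\<in>Pow X. p B * (\<Sum>C\<in>Pow A. (-1) ^ card C * ind C B))"
    by (subst sum.swap) (simp add: sum_distrib_left)
  also have "\<dots> = (\<Sum>B\<in>Pow X. p B * ind A B)"
  proof (rule sum.cong[OF refl])
    fix B assume B: "B \<in> Pow X"
    have "(\<Sum>C\<in>Pow A. (-1) ^ card C * ind C B)
       = (\<Sum>C\<in>Pow A. (-1) ^ card C * (1::real)) - (\<Sum>C\<in>Pow A. (-1) ^ card C * (if C \<subseteq> X - B then 1 else 0))
         - (\<Sum>C\<in>Pow A. (-1) ^ card C * (if C \<subseteq> B then 1 else 0)) + (\<Sum>C\<in>Pow A. (-1) ^ card C * (if C \<subseteq> {} then 1 else 0))"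
    proof -
      have "(\<Sum>C\<in>Pow A. (-1) ^ card C * ind C B) = (\<Sum>C\<in>Pow A. (-1) ^ card C * (1::real) - (-1) ^ card C * (if C \<subseteq> X - B then 1 else 0)
         - (-1) ^ card C * (if C \<subseteq> B then 1 else 0) + (-1) ^ card C * (if C \<subseteq> {} then 1 else 0))"
        apply (rule sum.cong[OF refl])
        using assms(2) unfolding ind_def by (subst ind_decomp[of _ X]; auto simp: algebra_simps)
      then show ?thesis by (simp add: sum.distrib sum_subtractf)
    qed
    also have "\<dots> = ind A B"
      using alt_pow[OF fA] alt_sub[OF fA, of "X - B"] alt_sub[OF fA, of B] alt_sub[OF fA, of "{}"] assms(2)
      unfolding ind_def by auto
    finally show "p B * (\<Sum>C\<in>Pow A. (-1) ^ card C * ind C B) = p B * ind A B" by simp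
  qed
  also have "\<dots> = seg_prob X p A" by (simp add: seg_prob_alt[OF assms(1)] ind_def)
  finally show ?thesis by simp
qed



lemma sum_pow_card:
  assumes "finite S"
  shows "(\<Sum>D\<in>Pow S. (g (card D) :: real)) = (\<Sum>k\<le>card S. real (card S choose k) * g k)"
proof -
  have "(\<Sum>D\<in>Pow S. g (card D)) = (\<Sum>k\<le>card S. \<Sum>D\<in>{D. D \<in> Pow S \<and> card D = k}. g (card D))"
    by (rule sum.group[symmetric]) (auto simp: assms card_mono)
  also have "\<dots> = (\<Sum>k\<le>card S. real (card S choose k) * g k)"
  proof (rule sum.cong[OF refl])
    fix k
    have "{D. D \<in> Pow S \<and> card D = k} = {D. D \<subseteq> S \<and> card D = k}" by auto
    then show "(\<Sum>D\<in>{D. D \<in> Pow S \<and> card D = k}. g (card D)) = real (card S choose k) * g k"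
      using n_subsets[OF assms, of k] by simp
  qed
  finally show ?thesis .
qed

lemma coef_sum:
  fixes t :: "nat \<Rightarrow> real"
  assumes t0: "\<And>k. even k \<Longrightarrow> t k = 0"
    and trec: "\<And>N. N \<ge> 1 \<Longrightarrow> 2 * t N + (\<Sum>k<N. real (N choose k) * t k) = 1"
    and fA: "finite A" and BA: "B \<subseteq> A" and eB: "even (card B)" and oA: "odd (card A)"
  shows "(\<Sum>C\<in>Pow A. (if B \<subseteq> C \<and> odd (card C) \<and> C \<noteq> A then t (card C - card B) else 0))
         = 1 - 2 * t (card A - card B)"
proof -
  define N where "N = card A - card B"
  have fB: "finite B" using fA BA finite_subset by blast
  have cAB: "card (A - B) = N" unfolding N_def using card_Diff_subset[OF fB BA] .
  have N1: "N \<ge> 1" using eB oA card_mono[OF fA BA] unfolding N_def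
    by (metis One_nat_def Suc_leI diff_is_0_eq dvd_0_right le_antisym less_eq_nat.simps(1) not_le) 
  define w where "w C = (if odd (card C) \<and> C \<noteq> A then t (card C - card B) else 0)" for C
  have "(\<Sum>C\<in>Pow A. (if B \<subseteq> C \<and> odd (card C) \<and> C \<noteq> A then t (card C - card B) else 0))
      = (\<Sum>C\<in>Pow A \<inter> {C. B \<subseteq> C}. w C)"
    by (simp add: sum.inter_restrict fA w_def cong: if_cong) (rule sum.cong; auto)
  also have "Pow A \<inter> {C. B \<subseteq> C} = (\<lambda>D. B \<union> D) ` Pow (A - B)" using BA by auto
  also have "(\<Sum>C\<in>(\<lambda>D. B \<union> D) ` Pow (A - B). w C) = (\<Sum>D\<in>Pow (A - B). w (B \<union> D))"
    by (subst sum.reindex) (auto simp: inj_on_def)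
  also have "\<dots> = (\<Sum>D\<in>Pow (A - B). (if odd (card D) \<and> card D < N then t (card D) else 0))"
  proof (rule sum.cong[OF refl])
    fix D assume D: "D \<in> Pow (A - B)"
    have fD: "finite D" using D fA finite_subset by auto
    have cu: "card (B \<union> D) = card B + card D" using D fB fD by (subst card_Un_disjoint) auto
    have "B \<union> D = A \<longleftrightarrow> card D = N"
    proof
      assume "B \<union> D = A" then show "card D = N" using cu N_def by simp
    next
      assume "card D = N"
      then have "D = A - B" using D cAB card_subset_eq[of "A - B" D] fA by auto
      then show "B \<union> D = A" using BA by auto
    qed
    moreover have "card D \<le> N" using D cAB card_mono[of "A - B" D] fA by auto
    ultimately show "w (B \<union> D) = (if odd (card D) \<and> card D < N then t (card D) else 0)"
      unfolding w_def cu using eB by auto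
  qed
  also have "\<dots> = (\<Sum>k\<le>N. real (N choose k) * (if odd k \<and> k < N then t k else 0))"
    using sum_pow_card[of "A - B" "\<lambda>k. if odd k \<and> k < N then t k else 0"] fA cAB by simp
  also have "\<dots> = (\<Sum>k<N. real (N choose k) * t k)"
  proof -
    have "(\<Sum>k\<le>N. real (N choose k) * (if odd k \<and> k < N then t k else 0))
        = (\<Sum>k<N. real (N choose k) * (if odd k \<and> k < N then t k else 0))"
      by (simp add: lessThan_Suc_atMost[symmetric])
    also have "\<dots> = (\<Sum>k<N. real (N choose k) * t k)"
      by (rule sum.cong[OF refl]) (auto simp: t0)
    finally show ?thesis .
  qed
  also have "\<dots> = 1 - 2 * t N" using trec[OF N1] by simp
  finally show ?thesis unfolding N_def .
qed

lemma part2_abs: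
  fixes s :: "'a set \<Rightarrow> real" and t :: "nat \<Rightarrow> real"
  assumes fX: "finite X"
    and P1: "\<And>A. A \<subseteq> X \<Longrightarrow> s A = (\<Sum>B\<in>Pow A. (-1) ^ card B * s B)"
    and t0: "\<And>k. even k \<Longrightarrow> t k = 0"
    and trec: "\<And>N. N \<ge> 1 \<Longrightarrow> 2 * t N + (\<Sum>k<N. real (N choose k) * t k) = 1"
  shows "A \<subseteq> X \<Longrightarrow> odd (card A) \<Longrightarrow>
     s A = (\<Sum>B\<in>{B. B \<subset> A \<and> even (card B)}. t (card A - card B) * s B)"
proof (induction "card A" arbitrary: A rule: less_induct)
  case less
  note AX = less.prems(1) and oA = less.prems(2)
  have fA: "finite A" using AX fX finite_subset by blast
  define E where "E B = (if even (card B) then s B else 0)" for B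
  define Od where "Od B = (if odd (card B) \<and> B \<noteq> A then s B else 0)" for B
  define w where "w B C = (if B \<subseteq> C \<and> even (card B) \<and> odd (card C) \<and> C \<noteq> A then t (card C - card B) else 0)" for B C
  have "s A = (\<Sum>B\<in>Pow A. (-1) ^ card B * s B)" using P1[OF AX] .
  also have "\<dots> = (\<Sum>B\<in>Pow A. E B - Od B - (if B = A then s A else 0))"
    by (rule sum.cong[OF refl]) (auto simp: E_def Od_def oA)
  also have "\<dots> = (\<Sum>B\<in>Pow A. E B) - (\<Sum>B\<in>Pow A. Od B) - s A"
    by (simp add: sum_subtractf fA)
  finally have eq1: "2 * s A = (\<Sum>B\<in>Pow A. E B) - (\<Sum>B\<in>Pow A. Od B)" by simp
  have "(\<Sum>C\<in>Pow A. Od C) = (\<Sum>C\<in>Pow A. \<Sum>B\<in>Pow A. w B C * s B)"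
  proof (rule sum.cong[OF refl])
    fix C assume C: "C \<in> Pow A"
    show "Od C = (\<Sum>B\<in>Pow A. w B C * s B)"
    proof (cases "odd (card C) \<and> C \<noteq> A")
      case True
      then have CA: "C \<subset> A" using C by auto
      have lt: "card C < card A" using psubset_card_mono[OF fA CA] .
      have CX: "C \<subseteq> X" using CA AX by auto
      have "s C = (\<Sum>B\<in>{B. B \<subset> C \<and> even (card B)}. t (card C - card B) * s B)"
        using less.hyps[OF lt CX] True by blast
      also have "{B. B \<subset> C \<and> even (card B)} = Pow A \<inter> {B. B \<subseteq> C \<and> even (card B)}"
        using CA True by auto
      also have "(\<Sum>B\<in>Pow A \<inter> {B. B \<subseteq> C \<and> even (card B)}. t (card C - card B) * s B)
           = (\<Sum>B\<in>Pow A. w B C * s B)"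
        by (simp add: sum.inter_restrict fA w_def True cong: if_cong) (rule sum.cong; auto)
      finally show ?thesis using True Od_def by simp
    next
      case False
      then have "\<And>B. w B C = 0" by (auto simp: w_def)
      then show ?thesis using False by (auto simp add: Od_def)
    qed
  qed
  also have "\<dots> = (\<Sum>B\<in>Pow A. s B * (\<Sum>C\<in>Pow A. w B C))"
    by (subst sum.swap) (simp add: sum_distrib_left mult_ac)
  also have "\<dots> = (\<Sum>B\<in>Pow A. (if even (card B) then s B * (1 - 2 * t (card A - card B)) else 0))"
  proof (rule sum.cong[OF refl])
    fix B assume B: "B \<in> Pow A"
    show "s B * (\<Sum>C\<in>Pow A. w B C) = (if even (card B) then s B * (1 - 2 * t (card A - card B)) else 0)"
    proof (cases "even (card B)")
      case True
      have "(\<Sum>C\<in>Pow A. w B C) = 1 - 2 * t (card A - card B)"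
        unfolding w_def using coef_sum[OF t0 trec fA _ True oA] B True by simp
      then show ?thesis using True by simp
    qed (simp add: w_def)
  qed
  finally have "2 * s A = (\<Sum>B\<in>Pow A. E B - (if even (card B) then s B * (1 - 2 * t (card A - card B)) else 0))"
    using eq1 by (simp add: sum_subtractf)
  also have "\<dots> = (\<Sum>B\<in>Pow A. 2 * (if even (card B) then t (card A - card B) * s B else 0))"
    by (rule sum.cong[OF refl]) (auto simp: E_def algebra_simps)
  also have "\<dots> = 2 * (\<Sum>B\<in>Pow A \<inter> {B. even (card B)}. t (card A - card B) * s B)"
    by (simp add: sum_distrib_left[symmetric] sum.inter_restrict fA)
  also have "Pow A \<inter> {B. even (card B)} = {B. B \<subset> A \<and> even (card B)}" using oA by auto
  finally show ?case by simp
qed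



definition smooth :: "(real \<Rightarrow> real) \<Rightarrow> bool" where
  "smooth f \<longleftrightarrow> (\<forall>n x. ((deriv ^^ n) f has_real_derivative deriv ((deriv ^^ n) f) x) (at x))"

lemma Suc_choose': "Suc n choose k = (n choose k) + (if k = 0 then 0 else (n choose (k-1)))"
  by (cases k) simp_all

lemma leibniz:
  assumes sf: "smooth f" and sg: "smooth g"
  shows "(deriv ^^ n) (\<lambda>w. f w * g w) z =
           (\<Sum>i = 0..n. of_nat (n choose i) * (deriv ^^ i) f z * (deriv ^^ (n-i)) g z)"
proof (induction n arbitrary: z)
  case 0 then show ?case by simp
next
  case (Suc n z)
  have *: "\<And>n. ((deriv ^^ n) f has_field_derivative deriv ((deriv ^^ n) f) z) (at z)"
          "\<And>n. ((deriv ^^ n) g has_field_derivative deriv ((deriv ^^ n) g) z) (at z)"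
    using sf sg unfolding smooth_def by auto
  have sumeq: "(\<Sum>i = 0..n.
               of_nat (n choose i) * (deriv ((deriv ^^ i) f) z * (deriv ^^ (n-i)) g z + deriv ((deriv ^^ (n-i)) g) z * (deriv ^^ i) f z)) =
            g z * deriv ((deriv ^^ n) f) z + (\<Sum>i = 0..n. (deriv ^^ i) f z * (of_nat (Suc n choose i) * (deriv ^^ (Suc n - i)) g z))"
    apply (simp add: Suc_choose' algebra_simps sum.distrib)
    apply (subst (4) sum_Suc_reindex)
    apply (auto simp: algebra_simps Suc_diff_le intro: sum.cong)
    done
  have "((deriv ^^ n) (\<lambda>w. f w * g w) has_field_derivative
         (\<Sum>i = 0..Suc n. (Suc n choose i) * (deriv ^^ i) f z * (deriv ^^ (Suc n - i)) g z))
        (at z)"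
    apply (rule has_field_derivative_transform_within_open
        [of "\<lambda>w. (\<Sum>i = 0..n. of_nat (n choose i) * (deriv ^^ i) f w * (deriv ^^ (n-i)) g w)" _ _ UNIV])
       apply (simp add: algebra_simps)
       apply (rule derivative_eq_intros | simp)+
           apply (auto intro: DERIV_mult * Suc.IH [symmetric])
    by (metis (no_types, lifting) mult.commute sum.cong sumeq)
  then show ?case
    unfolding funpow.simps o_apply
    by (simp add: DERIV_imp_deriv)
qed

lemma smoothI:
  assumes "\<And>n x. (deriv ^^ n) f differentiable (at x)"
  shows "smooth f"
  using assms unfolding smooth_def by (simp add: DERIV_deriv_iff_real_differentiable)

lemma tanh_deriv_real: "((\<lambda>x. tanh x) has_real_derivative (1 - tanh x ^ 2) * 1) (at (x::real))"
proof -
  have "cosh x \<noteq> 0" using cosh_real_pos[of x] by simp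
  then show ?thesis by (rule has_field_derivative_tanh) (rule DERIV_ident)
qed

lemma poly_tanh_deriv:
  "((\<lambda>x. poly P (tanh x)) has_real_derivative poly (pderiv P * [:1,0,-1:]) (tanh x)) (at (x::real))"
proof -
  have "((\<lambda>x. poly P (tanh x)) has_real_derivative poly (pderiv P) (tanh x) * ((1 - tanh x ^ 2) * 1)) (at x)"
    by (rule DERIV_chain2[OF poly_DERIV tanh_deriv_real])
  then show ?thesis by (simp add: power2_eq_square algebra_simps)
qed

lemma tanh_poly: "\<exists>P. (deriv ^^ n) (tanh :: real \<Rightarrow> real) = (\<lambda>x. poly P (tanh x))"
proof (induction n)
  case 0
  show ?case by (rule exI[of _ "[:0,1:]"]) auto
next
  case (Suc n)
  then obtain P where P: "(deriv ^^ n) (tanh :: real \<Rightarrow> real) = (\<lambda>x. poly P (tanh x))" by blast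
  show ?case
    by (rule exI[of _ "pderiv P * [:1,0,-1:]"]) (simp add: P fun_eq_iff DERIV_imp_deriv[OF poly_tanh_deriv])
qed

lemma smooth_tanh: "smooth (tanh :: real \<Rightarrow> real)"
proof (rule smoothI)
  fix n and x :: real
  obtain P where P: "(deriv ^^ n) (tanh :: real \<Rightarrow> real) = (\<lambda>x. poly P (tanh x))" using tanh_poly by blast
  show "(deriv ^^ n) tanh differentiable (at x)" unfolding P
    using poly_tanh_deriv real_differentiable_def by blast
qed

lemma deriv_g: "(deriv ^^ n) (\<lambda>x::real. exp (2*x) + 1) = (\<lambda>x. 2^n * exp (2*x) + (if n = 0 then 1 else 0))"
proof (induction n)
  case 0 then show ?case by simp
next
  case (Suc n)
  have "((\<lambda>x::real. 2^n * exp (2*x) + (if n = 0 then 1 else 0)) has_real_derivative 2^Suc n * exp (2*x)) (at x)" for x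
    by (auto intro!: derivative_eq_intros)
  then show ?case unfolding funpow.simps o_apply Suc.IH
    by (auto simp: fun_eq_iff intro!: DERIV_imp_deriv)
qed

lemma deriv_h: "(deriv ^^ n) (\<lambda>x::real. exp (2*x) - 1) = (\<lambda>x. 2^n * exp (2*x) - (if n = 0 then 1 else 0))"
proof (induction n)
  case 0 then show ?case by simp
next
  case (Suc n)
  have "((\<lambda>x::real. 2^n * exp (2*x) - (if n = 0 then 1 else 0)) has_real_derivative 2^Suc n * exp (2*x)) (at x)" for x
    by (auto intro!: derivative_eq_intros)
  then show ?case unfolding funpow.simps o_apply Suc.IH
    by (auto simp: fun_eq_iff intro!: DERIV_imp_deriv)
qed

lemma smooth_g: "smooth (\<lambda>x::real. exp (2*x) + 1)"
proof (rule smoothI)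
  fix n and x :: real
  have "((\<lambda>x::real. 2^n * exp (2*x) + (if n = 0 then 1 else 0)) has_real_derivative 2^Suc n * exp (2*x)) (at x)"
    by (auto intro!: derivative_eq_intros)
  then show "(deriv ^^ n) (\<lambda>x::real. exp (2*x) + 1) differentiable (at x)"
    unfolding deriv_g using real_differentiable_def by blast
qed

lemma tanh_g: "tanh x * (exp (2*x) + 1) = exp (2*x) - (1::real)"
proof -
  define e where "e = exp (2*x)"
  have e0: "e > 0" unfolding e_def by simp
  have em: "exp (- 2 * x) = 1 / e" unfolding e_def by (simp add: exp_minus inverse_eq_divide)
  have "tanh x = (1 - 1/e) / (1 + 1/e)" unfolding tanh_real_altdef em ..
  also have "\<dots> = (e - 1) / (e + 1)"
  proof -
    have a: "1 - 1/e = (e-1)/e" "1 + 1/e = (e+1)/e" using e0 by (simp_all add: field_simps)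
    show ?thesis unfolding a using e0 by simp
  qed
  finally have t: "tanh x = (e - 1) / (e + 1)" .
  have "e + 1 \<noteq> 0" using e0 by simp
  then have "(e - 1) / (e + 1) * (e + 1) = e - 1" by simp
  then show ?thesis unfolding t e_def .
qed

lemma tangent_rec:
  assumes "n \<ge> 1"
  shows "tangent_number n + (\<Sum>i = 0..n. real (n choose i) * tangent_number i * 2 ^ (n - i)) = 2 ^ n"
proof -
  have "(deriv ^^ n) (\<lambda>x::real. exp (2*x) - 1) 0 = (deriv ^^ n) (\<lambda>x. tanh x * (exp (2*x) + 1)) 0"
    by (simp add: tanh_g)
  also have "\<dots> = (\<Sum>i = 0..n. real (n choose i) * tangent_number i * (2 ^ (n - i) + (if n - i = 0 then 1 else 0)))"
    unfolding leibniz[OF smooth_tanh smooth_g] deriv_g tangent_number_def by simp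
  also have "\<dots> = (\<Sum>i = 0..n. real (n choose i) * tangent_number i * 2 ^ (n - i) + (if i = n then tangent_number n else 0))"
    by (rule sum.cong[OF refl]) (auto simp: algebra_simps)
  also have "\<dots> = (\<Sum>i = 0..n. real (n choose i) * tangent_number i * 2 ^ (n - i)) + tangent_number n"
    by (simp add: sum.distrib)
  finally show ?thesis using assms by (simp add: deriv_h)
qed

lemma tanh_odd_deriv: "(deriv ^^ n) (tanh :: real \<Rightarrow> real) (-x) = (-1) ^ Suc n * (deriv ^^ n) tanh x"
proof (induction n arbitrary: x)
  case 0 then show ?case by simp
next
  case (Suc n)
  define D where "D = (deriv ^^ n) (tanh :: real \<Rightarrow> real)"
  define c :: real where "c = (-1) ^ Suc n"
  have IH: "D (-y) = c * D y" for y using Suc.IH unfolding D_def c_def .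
  have DD: "D = (\<lambda>y. c * D (-y))"
  proof
    fix y show "D y = c * D (-y)" using IH[of "-y"] by simp
  qed
  have der: "(D has_real_derivative deriv D y) (at y)" for y
    using smooth_tanh unfolding smooth_def D_def by blast
  have "((\<lambda>y. c * D (-y)) has_real_derivative c * (deriv D (-z) * -1)) (at z)" for z
    by (rule DERIV_cmult, rule DERIV_chain2[OF der]) (auto intro!: derivative_eq_intros)
  then have "deriv (\<lambda>y. c * D (-y)) z = - c * deriv D (-z)" for z
    by (simp add: DERIV_imp_deriv)
  then have dz: "deriv D z = - c * deriv D (-z)" for z
    using arg_cong[OF DD, of "\<lambda>F. deriv F z"] by simp
  have "deriv D (-x) = - c * deriv D x" using dz[of "-x"] by simp
  then show ?case unfolding D_def c_def by simp
qed

lemma tangent_even: "even k \<Longrightarrow> tangent_number k = 0"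
  using tanh_odd_deriv[of k 0] unfolding tangent_number_def by simp


lemma trec_t:
  assumes "N \<ge> 1"
  shows "2 * (tangent_number N / 2 ^ N) + (\<Sum>k<N. real (N choose k) * (tangent_number k / 2 ^ k)) = 1"
proof -
  have "tangent_number N + (\<Sum>i = 0..N. real (N choose i) * tangent_number i * 2 ^ (N - i)) = 2 ^ N"
    using tangent_rec[OF assms] .
  then have "(tangent_number N + (\<Sum>i = 0..N. real (N choose i) * tangent_number i * 2 ^ (N - i))) / 2 ^ N = 1"
    by simp
  then have "tangent_number N / 2 ^ N + (\<Sum>i = 0..N. real (N choose i) * tangent_number i * 2 ^ (N - i) / 2 ^ N) = 1"
    by (simp add: add_divide_distrib sum_divide_distrib)
  moreover have "real (N choose i) * tangent_number i * 2 ^ (N - i) / 2 ^ N = real (N choose i) * (tangent_number i / 2 ^ i)"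
    if "i \<in> {0..N}" for i
  proof -
    have "(2::real) ^ N = 2 ^ (N - i) * 2 ^ i" using that by (simp add: power_add[symmetric])
    then show ?thesis by simp
  qed
  ultimately have "tangent_number N / 2 ^ N + (\<Sum>i = 0..N. real (N choose i) * (tangent_number i / 2 ^ i)) = 1"
    by simp
  moreover have "(\<Sum>i = 0..N. real (N choose i) * (tangent_number i / 2 ^ i))
      = (\<Sum>i<N. real (N choose i) * (tangent_number i / 2 ^ i)) + tangent_number N / 2 ^ N"
    by (simp add: atLeast0AtMost lessThan_Suc_atMost[symmetric])
  ultimately show ?thesis by simp
qed

theorem theorem1:
  fixes X :: "'a set" and p :: "'a set \<Rightarrow> real"
  assumes "finite X"
    and "\<And>B. B \<subseteq> X \<Longrightarrow> p B \<ge> 0"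
    and "(\<Sum>B\<in>Pow X. p B) = 1"
  shows "(\<forall>A. A \<subseteq> X \<longrightarrow>
            seg_prob X p A = (\<Sum>B\<in>Pow A. (-1) ^ card B * seg_prob X p B))
       \<and> (\<forall>A. A \<subseteq> X \<longrightarrow> odd (card A) \<longrightarrow>
            seg_prob X p A =
              (\<Sum>B\<in>{B. B \<subset> A \<and> even (card B)}.
                 tangent_number (card A - card B) / 2 ^ (card A - card B) * seg_prob X p B))"
proof (intro conjI allI impI)
  fix A assume "A \<subseteq> X"
  then show "seg_prob X p A = (\<Sum>B\<in>Pow A. (-1) ^ card B * seg_prob X p B)"
    using part1[OF assms(1)] by blast
next
  fix A assume A: "A \<subseteq> X" "odd (card A)"
  have "seg_prob X p A = (\<Sum>B\<in>{B. B \<subset> A \<and> even (card B)}.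
                 (\<lambda>k. tangent_number k / 2 ^ k) (card A - card B) * seg_prob X p B)"
  proof (rule part2_abs[OF assms(1), of "seg_prob X p" "\<lambda>k. tangent_number k / 2 ^ k"])
    show "\<And>A. A \<subseteq> X \<Longrightarrow> seg_prob X p A = (\<Sum>B\<in>Pow A. (-1) ^ card B * seg_prob X p B)"
      using part1[OF assms(1)] by blast
    show "\<And>k. even k \<Longrightarrow> tangent_number k / 2 ^ k = 0" by (simp add: tangent_even)
    show "\<And>N. N \<ge> 1 \<Longrightarrow> 2 * (tangent_number N / 2 ^ N) + (\<Sum>k<N. real (N choose k) * (tangent_number k / 2 ^ k)) = 1"
      by (rule trec_t)
  qed (use A in auto)
  then show "seg_prob X p A = (\<Sum>B\<in>{B. B \<subset> A \<and> even (card B)}.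
                 tangent_number (card A - card B) / 2 ^ (card A - card B) * seg_prob X p B)"
    by simp
qed

end
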